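(* Suppose $n<p$. If $q\in[0,2]$, then $$\inf_{A\in\mathbb{R}^{n\times p}}\ \inf_{\delta:\mathbb{R}^n\to\mathbb{R}}\ \sup_{x\in\mathbb{R}^p\setminus\{0\}}\Big|\frac{\delta(Ax)}{s_q(x)}-1\Big|\ge\frac1{2\pi e}\Big(1-\frac np\Big)^2-\frac1{2p}.$$ If $q\in(2,\infty]$, then $$\inf_{A\in\mathbb{R}^{n\times p}}\ \inf_{\delta:\mathbb{R}^n\to\mathbb{R}}\ \sup_{x\in\mathbb{R}^p\setminus\{0\}}\Big|\frac{\delta(Ax)}{s_q(x)}-1\Big|\ge\frac1{\sqrt{2\pi e}}\cdot\frac{1-(n/p)}{1+\sqrt{16\log(2p)}}-\frac1{2p}.$$
   Context: The infimum over $\delta$ is over all functions $\mathbb{R}^n\to\mathbb{R}$ (estimators using noiseless deterministic measurements $y=Ax$). For $x\in\mathbb{R}^p\setminus\{0\}$ let $\pi_j(x):=|x_j|/\|x\|_1$. For $q\notin\{0,1,\infty\}$, $s_q(x):=(\|x\|_q/\|x\|_1)^{q/(1-q)}=\exp\big(\frac1{1-q}\log\sum_j\pi_j(x)^q\big)$; $s_0(x):=\|x\|_0$ (number of nonzero entries), $s_1(x):=\exp\big(-\sum_j\pi_j(x)\log\pi_j(x)\big)$, $s_\infty(x):=\|x\|_1/\|x\|_\infty$ (these are the limits of $s_q$ as $q\to0,1,\infty$). *)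

theory Defs
  imports "HOL-Analysis.Analysis"
begin

definition l1norm :: "real ^ 'p \<Rightarrow> real" where
  "l1norm x = (\<Sum>j\<in>UNIV. \<bar>x $ j\<bar>)"

definition pvec :: "real ^ 'p \<Rightarrow> 'p \<Rightarrow> real" where
  "pvec x j = \<bar>x $ j\<bar> / l1norm x"

text \<open>Numerical sparsity s_q(x), for q in [0, infinity] (q as extended real).
  q = 0: number of nonzero entries; q = 1: exponential of Shannon entropy
  (with 0 log 0 = 0, which matches ln 0 = 0 in Isabelle);
  q = infinity: ||x||_1 / ||x||_inf;
  otherwise exp(1/(1-q) * log(sum_j pi_j(x)^q)).\<close>
definition sq :: "ereal \<Rightarrow> real ^ 'p \<Rightarrow> real" where
  "sq q x =
    (if q = \<infinity> then l1norm x / Max (range (\<lambda>j. \<bar>x $ j\<bar>))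
     else if q = 0 then real (card {j. x $ j \<noteq> 0})
     else if q = 1 then exp (- (\<Sum>j\<in>UNIV. pvec x j * ln (pvec x j)))
     else exp (1 / (1 - real_of_ereal q) *
               ln (\<Sum>j\<in>UNIV. pvec x j powr real_of_ereal q)))"

end

theory Submission
  imports Defs
begin

lemma ker:
  fixes A :: "real ^ 'p ^ 'n"
  assumes "CARD('n) < CARD('p)"
  shows "\<exists>v. v \<noteq> 0 \<and> A *v v = 0"
proof (rule ccontr)
  assume "\<not> ?thesis"
  hence inj: "inj ((*v) A)" 
    by (metis (no_types, lifting) injI matrix_vector_right_distrib right_minus_eq matrix_vector_mult_diff_distrib)
  have lin: "linear ((*v) A)" by (simp add: matrix_vector_mul_linear)
  have "dim ((*v) A ` UNIV) = dim (UNIV :: (real^'p) set)"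
    by (rule dim_image_eq[OF lin]) (use inj in \<open>auto intro: inj_on_subset\<close>)
  moreover have "dim ((*v) A ` UNIV) \<le> CARD('n)"
    by (metis dim_subset_UNIV DIM_cart DIM_real mult.right_neutral)
  ultimately show False using assms by (simp add: dim_UNIV)
qed


lemma sq_single:
  fixes y :: "real ^ 'p"
  assumes "c \<noteq> 0" and y: "y = (\<chi> k. if k = i then c else 0)"
  shows "sq q y = 1"
proof -
  have l1: "l1norm y = \<bar>c\<bar>" unfolding l1norm_def y
    by (simp add: if_distrib sum.delta cong: if_cong)
  have pv: "pvec y j = (if j = i then 1 else 0)" for j
    using assms(1) unfolding pvec_def l1 by (simp add: y)
  have mx: "Max (range (\<lambda>j. \<bar>y $ j\<bar>)) = \<bar>c\<bar>"
  proof (rule Max_eqI)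
    show "finite (range (\<lambda>j. \<bar>y $ j\<bar>))" by simp
    show "\<bar>c\<bar> \<in> range (\<lambda>j. \<bar>y $ j\<bar>)" by (rule range_eqI[of _ _ i]) (simp add: y)
    fix z assume "z \<in> range (\<lambda>j. \<bar>y $ j\<bar>)" then show "z \<le> \<bar>c\<bar>" by (auto simp: y)
  qed
  have cd: "{j. y $ j \<noteq> 0} = {i}" using assms by (auto simp: y)
  have s1: "(\<Sum>j\<in>UNIV. pvec y j * ln (pvec y j)) = 0" by (rule sum.neutral) (simp add: pv)
  have s2: "(\<Sum>j\<in>UNIV. pvec y j powr r) = 1" for r
  proof -
    have "(\<Sum>j\<in>UNIV. pvec y j powr r) = (\<Sum>j\<in>UNIV. if j = i then 1 else 0)"
      by (rule sum.cong) (auto simp: pv)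
    thus ?thesis by simp
  qed
  show ?thesis unfolding sq_def using assms(1)
    by (simp add: l1 mx cd s1 s2)
qed

lemma sq_two:
  fixes x :: "real ^ 'p"
  assumes q: "q \<ge> 0" and ij: "i \<noteq> j"
    and M: "\<bar>x $ i\<bar> = M" "\<bar>x $ j\<bar> = M" "M > 0" "\<And>k. \<bar>x $ k\<bar> \<le> M"
  shows "sq q x \<ge> 2"
proof -
  define L where "L = l1norm x"
  have fin: "finite (range (\<lambda>j. \<bar>x $ j\<bar>))" by simp
  have mx: "Max (range (\<lambda>j. \<bar>x $ j\<bar>)) = M"
    by (rule Max_eqI[OF fin]) (use M in \<open>auto intro!: range_eqI[of _ _ i]\<close>)
  have "L \<ge> \<bar>x $ i\<bar> + \<bar>x $ j\<bar>"
  proof -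
    have "(\<Sum>k\<in>{i,j}. \<bar>x $ k\<bar>) \<le> (\<Sum>k\<in>UNIV. \<bar>x $ k\<bar>)"
      by (rule sum_mono2) auto
    thus ?thesis using ij by (simp add: L_def l1norm_def)
  qed
  hence L2: "L \<ge> 2 * M" using M by simp
  hence Lpos: "L > 0" using M by simp
  define \<mu> where "\<mu> = M / L"
  have mupos: "\<mu> > 0" using Lpos M by (simp add: \<mu>_def)
  have pv: "pvec x k = \<bar>x $ k\<bar> / L" for k by (simp add: pvec_def L_def)
  have pvle: "pvec x k \<le> \<mu>" for k unfolding pv \<mu>_def using M(4)[of k] Lpos
    by (simp add: divide_right_mono)
  have pvge: "pvec x k \<ge> 0" for k unfolding pv using Lpos by simp
  have psum: "(\<Sum>k\<in>UNIV. pvec x k) = 1" unfolding pv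
    using Lpos by (simp add: sum_divide_distrib[symmetric] L_def l1norm_def)
  have pvi: "pvec x i > 0" unfolding pv using M Lpos by simp
  have key: "exp (- ln \<mu>) \<ge> 2"
  proof -
    have "exp (- ln \<mu>) = L / M" using mupos Lpos M by (simp add: exp_minus \<mu>_def)
    moreover have "L / M \<ge> 2" using L2 M by (simp add: field_simps)
    ultimately show ?thesis by simp
  qed
  consider "q = \<infinity>" | "q = 0" | "q = 1" | r where "q = ereal r" "r > 0" "r \<noteq> 1"
    using q by (cases q) (force simp: zero_ereal_def one_ereal_def)+
  then show ?thesis
  proof cases
    case 1 thus ?thesis unfolding sq_def using L2 M by (simp add: mx L_def[symmetric] field_simps)
  next
    case 2
    have "{i,j} \<subseteq> {k. x $ k \<noteq> 0}" using M by auto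
    hence "card {i,j} \<le> card {k. x $ k \<noteq> 0}" by (rule card_mono[rotated]) simp
    thus ?thesis unfolding sq_def using 2 ij by simp
  next
    case 3
    have "(\<Sum>k\<in>UNIV. pvec x k * ln (pvec x k)) \<le> (\<Sum>k\<in>UNIV. pvec x k * ln \<mu>)"
    proof (rule sum_mono)
      fix k
      show "pvec x k * ln (pvec x k) \<le> pvec x k * ln \<mu>"
      proof (cases "pvec x k = 0")
        case False
        hence "pvec x k > 0" using pvge[of k] by simp
        thus ?thesis using pvle[of k] by (simp add: mult_left_mono)
      qed simp
    qed
    also have "\<dots> = ln \<mu>" using psum by (simp add: sum_distrib_right[symmetric])
    finally have "exp (- ln \<mu>) \<le> exp (- (\<Sum>k\<in>UNIV. pvec x k * ln (pvec x k)))" by simp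
    hence "2 \<le> exp (- (\<Sum>k\<in>UNIV. pvec x k * ln (pvec x k)))" using key by linarith
    thus ?thesis unfolding sq_def using 3 by simp
  next
    case 4
    have trm: "pvec x k powr r = pvec x k * pvec x k powr (r - 1)" if "pvec x k > 0" for k
      using that by (simp add: powr_diff powr_one_gt_zero_iff) 
    have Spos: "(\<Sum>k\<in>UNIV. pvec x k powr r) > 0"
    proof -
      have "pvec x i powr r \<le> (\<Sum>k\<in>UNIV. pvec x k powr r)"
        by (rule member_le_sum) auto
      moreover have "pvec x i powr r > 0" using pvi by simp
      ultimately show ?thesis by linarith
    qed
    have mid: "- ln \<mu> \<le> 1 / (1 - r) * ln (\<Sum>k\<in>UNIV. pvec x k powr r)"
    proof (cases "r > 1")
      case True
      have "(\<Sum>k\<in>UNIV. pvec x k powr r) \<le> (\<Sum>k\<in>UNIV. pvec x k * \<mu> powr (r - 1))"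
      proof (rule sum_mono)
        fix k
        show "pvec x k powr r \<le> pvec x k * \<mu> powr (r - 1)"
        proof (cases "pvec x k = 0")
          case False
          hence pk: "pvec x k > 0" using pvge[of k] by simp
          have "pvec x k powr (r - 1) \<le> \<mu> powr (r - 1)"
            using pvle[of k] pk True by (intro powr_mono2) auto
          thus ?thesis using trm[OF pk] pk by (simp add: mult_left_mono)
        qed simp
      qed
      also have "\<dots> = \<mu> powr (r - 1)" using psum by (simp add: sum_distrib_right[symmetric])
      finally have "(\<Sum>k\<in>UNIV. pvec x k powr r) \<le> \<mu> powr (r - 1)" .
      hence "ln (\<Sum>k\<in>UNIV. pvec x k powr r) \<le> ln (\<mu> powr (r - 1))"
        using Spos by (rule ln_mono)
      also have "\<dots> = (r - 1) * ln \<mu>" using mupos by (simp add: ln_powr)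
      finally have h: "ln (\<Sum>k\<in>UNIV. pvec x k powr r) \<le> (r - 1) * ln \<mu>" .
      have "1 / (1 - r) * ln (\<Sum>k\<in>UNIV. pvec x k powr r) \<ge> 1 / (1 - r) * ((r - 1) * ln \<mu>)"
        using True h by (intro mult_left_mono_neg) auto
      moreover have "1 / (1 - r) * ((r - 1) * ln \<mu>) = - ln \<mu>" using True by (simp add: field_simps)
      ultimately show ?thesis by simp
    next
      case False
      hence r1: "r < 1" using 4 by simp
      have "(\<Sum>k\<in>UNIV. pvec x k * \<mu> powr (r - 1)) \<le> (\<Sum>k\<in>UNIV. pvec x k powr r)"
      proof (rule sum_mono)
        fix k
        show "pvec x k * \<mu> powr (r - 1) \<le> pvec x k powr r"
        proof (cases "pvec x k = 0")
          case False
          hence pk: "pvec x k > 0" using pvge[of k] by simp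
          have "\<mu> powr (r - 1) \<le> pvec x k powr (r - 1)"
            using pvle[of k] pk r1 by (intro powr_mono2') auto
          thus ?thesis using trm[OF pk] pk by (simp add: mult_left_mono)
        qed simp
      qed
      moreover have "(\<Sum>k\<in>UNIV. pvec x k * \<mu> powr (r - 1)) = \<mu> powr (r - 1)"
        using psum by (simp add: sum_distrib_right[symmetric])
      ultimately have "ln (\<mu> powr (r - 1)) \<le> ln (\<Sum>k\<in>UNIV. pvec x k powr r)"
        using mupos by (intro ln_mono) auto
      moreover have "ln (\<mu> powr (r - 1)) = (r - 1) * ln \<mu>" using mupos by (simp add: ln_powr)
      ultimately have h: "(r - 1) * ln \<mu> \<le> ln (\<Sum>k\<in>UNIV. pvec x k powr r)" by simp
      have "1 / (1 - r) * ((r - 1) * ln \<mu>) \<le> 1 / (1 - r) * ln (\<Sum>k\<in>UNIV. pvec x k powr r)"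
        using r1 h by (intro mult_left_mono) auto
      moreover have "1 / (1 - r) * ((r - 1) * ln \<mu>) = - ln \<mu>" using r1 by (simp add: field_simps)
      ultimately show ?thesis by simp
    qed
    have "exp (- ln \<mu>) \<le> exp (1 / (1 - r) * ln (\<Sum>k\<in>UNIV. pvec x k powr r))"
      using mid by simp
    hence "2 \<le> exp (1 / (1 - r) * ln (\<Sum>k\<in>UNIV. pvec x k powr r))" using key by linarith
    thus ?thesis unfolding sq_def using 4 by simp
  qed
qed

lemma core:
  fixes A :: "real ^ 'p ^ 'n" and \<delta> :: "real ^ 'n \<Rightarrow> real" and q :: ereal
  assumes "CARD('n) < CARD('p)" "q \<ge> 0"
  shows "ereal (1/3) \<le> (SUP x \<in> UNIV - {0 :: real ^ 'p}. ereal \<bar>\<delta> (A *v x) / sq q x - 1\<bar>)"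
proof -
  obtain v :: "real ^ 'p" where v: "v \<noteq> 0" "A *v v = 0" using ker[OF assms(1)] by blast
  define M where "M = Max (range (\<lambda>k. \<bar>v $ k\<bar>))"
  have fin: "finite (range (\<lambda>k. \<bar>v $ k\<bar>))" by simp
  have "M \<in> range (\<lambda>k. \<bar>v $ k\<bar>)" unfolding M_def by (rule Max_in[OF fin]) simp
  then obtain j where j: "M = \<bar>v $ j\<bar>" by blast
  have vle: "\<bar>v $ k\<bar> \<le> M" for k unfolding M_def by (rule Max_ge[OF fin]) auto
  obtain k0 where "v $ k0 \<noteq> 0" using v(1) by (metis vec_eq_iff zero_index)
  hence Mpos: "M > 0" using vle[of k0] by linarith
  have "CARD('n) > 0" by (rule zero_less_card_finite)
  hence "CARD('p) \<ge> 2" using assms(1) by linarith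
  have "\<exists>i::'p. i \<noteq> j"
  proof (rule ccontr)
    assume "\<not> ?thesis"
    hence "(UNIV::'p set) = {j}" by auto
    hence "card (UNIV::'p set) = card {j}" by (rule arg_cong)
    hence "CARD('p) = 1" by simp
    thus False using \<open>CARD('p) \<ge> 2\<close> by simp
  qed
  then obtain i :: 'p where ij: "i \<noteq> j" by blast
  define t where "t = (if v $ i = M then - M else M)"
  have tne: "t \<noteq> v $ i" "\<bar>t\<bar> = M" using Mpos by (auto simp: t_def)
  define c where "c = t - v $ i"
  have c0: "c \<noteq> 0" using tne by (simp add: c_def)
  define y :: "real ^ 'p" where "y = (\<chi> k. if k = i then c else 0)"
  define x where "x = v + y"
  have xi: "x $ i = t" by (simp add: x_def y_def c_def)
  have xk: "x $ k = v $ k" if "k \<noteq> i" for k using that by (simp add: x_def y_def)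
  have sy: "sq q y = 1" by (rule sq_single[OF c0 y_def])
  have sx: "sq q x \<ge> 2"
  proof (rule sq_two[OF assms(2) ij[symmetric]])
    show "\<bar>x $ j\<bar> = M" using ij j xk[of j] by simp
    show "\<bar>x $ i\<bar> = M" using xi tne by simp
    show "M > 0" by (rule Mpos)
    fix k show "\<bar>x $ k\<bar> \<le> M" by (cases "k = i") (use xi tne xk vle in auto)
  qed
  have y0: "y \<noteq> 0"
  proof
    assume "y = 0" hence "y $ i = 0" by simp
    thus False using c0 by (simp add: y_def)
  qed
  have x0: "x \<noteq> 0"
  proof
    assume "x = 0" hence "x $ i = 0" by simp
    thus False using xi tne Mpos by simp
  qed
  have Axy: "A *v x = A *v y" by (simp add: x_def matrix_vector_right_distrib v(2))
  define d where "d = \<delta> (A *v y)"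
  have "1/3 \<le> \<bar>d / sq q y - 1\<bar> \<or> 1/3 \<le> \<bar>d / sq q x - 1\<bar>"
  proof (cases "1/3 \<le> \<bar>d - 1\<bar>")
    case True thus ?thesis by (simp add: sy)
  next
    case False
    hence "\<bar>d - 1\<bar> < 1/3" by linarith
    hence d: "d < 4/3" using abs_ge_self[of "d - 1"] by linarith
    have "d / sq q x < 2/3"
    proof (cases "d \<ge> 0")
      case True
      have "d / sq q x \<le> d / 2" using sx True by (intro divide_left_mono) auto
      thus ?thesis using d by linarith
    next
      case False
      have "d / sq q x < 0" using False sx by (intro divide_neg_pos) auto
      thus ?thesis by linarith
    qed
    hence "1/3 \<le> \<bar>d / sq q x - 1\<bar>" using abs_ge_minus_self[of "d / sq q x - 1"] by linarith
    thus ?thesis by blast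
  qed
  moreover have "ereal \<bar>d / sq q y - 1\<bar> \<le> (SUP x \<in> UNIV - {0 :: real ^ 'p}. ereal \<bar>\<delta> (A *v x) / sq q x - 1\<bar>)"
    by (rule SUP_upper2[of y]) (auto simp: y0 d_def)
  moreover have "ereal \<bar>d / sq q x - 1\<bar> \<le> (SUP x \<in> UNIV - {0 :: real ^ 'p}. ereal \<bar>\<delta> (A *v x) / sq q x - 1\<bar>)"
    by (rule SUP_upper2[of x]) (auto simp: x0 d_def Axy)
  ultimately show ?thesis by (meson ereal_less_eq(3) order_trans)
qed

lemma core2:
  fixes q :: ereal
  assumes "CARD('n) < CARD('p)" "q \<ge> 0" "r \<le> 1/3"
  shows "ereal r \<le> (INF A :: real ^ 'p ^ 'n. INF \<delta> :: real ^ 'n \<Rightarrow> real.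
                 SUP x \<in> UNIV - {0 :: real ^ 'p}. ereal \<bar>\<delta> (A *v x) / sq q x - 1\<bar>)"
proof (intro INF_greatest)
  fix A :: "real ^ 'p ^ 'n" and \<delta> :: "real ^ 'n \<Rightarrow> real"
  have "ereal r \<le> ereal (1/3)" using assms(3) by simp
  also have "\<dots> \<le> (SUP x \<in> UNIV - {0 :: real ^ 'p}. ereal \<bar>\<delta> (A *v x) / sq q x - 1\<bar>)"
    by (rule core[OF assms(1,2)])
  finally show "ereal r \<le> (SUP x \<in> UNIV - {0 :: real ^ 'p}. ereal \<bar>\<delta> (A *v x) / sq q x - 1\<bar>)" .
qed


theorem theorem4:
  fixes q :: ereal
  assumes "CARD('n) < CARD('p)"
  shows "(q \<in> {0..2} \<longrightarrow>
           ereal (1 / (2 * pi * exp 1) * (1 - real CARD('n) / real CARD('p))^2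
                  - 1 / (2 * real CARD('p)))
           \<le> (INF A :: real ^ 'p ^ 'n. INF \<delta> :: real ^ 'n \<Rightarrow> real.
                 SUP x \<in> UNIV - {0 :: real ^ 'p}. ereal \<bar>\<delta> (A *v x) / sq q x - 1\<bar>))
       \<and> (q \<in> {2<..} \<longrightarrow>
           ereal (1 / sqrt (2 * pi * exp 1) *
                  ((1 - real CARD('n) / real CARD('p)) /
                   (1 + sqrt (16 * ln (2 * real CARD('p)))))
                  - 1 / (2 * real CARD('p)))
           \<le> (INF A :: real ^ 'p ^ 'n. INF \<delta> :: real ^ 'n \<Rightarrow> real.
                 SUP x \<in> UNIV - {0 :: real ^ 'p}. ereal \<bar>\<delta> (A *v x) / sq q x - 1\<bar>))"
proof -
  have n1: "real CARD('n) / real CARD('p) < 1" "real CARD('n) / real CARD('p) \<ge> 0"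
    using assms by auto
  have e: "exp 1 \<ge> (2::real)" using exp_ge_add_one_self[of 1] by simp
  have "3 * 2 \<le> pi * exp 1" using pi_gt3 e by (intro mult_mono) auto
  hence pe: "2 * pi * exp 1 \<ge> 9" by linarith
  have b1: "1 / (2 * pi * exp 1) * (1 - real CARD('n) / real CARD('p))^2
                  - 1 / (2 * real CARD('p)) \<le> 1/3"
  proof -
    have "(1 - real CARD('n) / real CARD('p))^2 \<le> 1" using n1 by (intro power_le_one) auto
    moreover have "1 / (2 * pi * exp 1) \<le> 1/9" using pe by (simp add: divide_simps)
    moreover have "0 \<le> 1 / (2 * real CARD('p))" by simp
    moreover have "0 \<le> 1 / (2 * pi * exp 1)" using pe by simp
    ultimately have "1 / (2 * pi * exp 1) * (1 - real CARD('n) / real CARD('p))^2 \<le> 1 / (2 * pi * exp 1) * 1"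
      by (intro mult_left_mono) auto
    thus ?thesis using \<open>1 / (2 * pi * exp 1) \<le> 1/9\<close> \<open>0 \<le> 1 / (2 * real CARD('p))\<close> by linarith
  qed
  have b2: "1 / sqrt (2 * pi * exp 1) *
                  ((1 - real CARD('n) / real CARD('p)) /
                   (1 + sqrt (16 * ln (2 * real CARD('p)))))
                  - 1 / (2 * real CARD('p)) \<le> 1/3"
  proof -
    have s: "sqrt (2 * pi * exp 1) \<ge> 3" using pe real_sqrt_le_mono[OF pe] by simp
    have f: "(1 - real CARD('n) / real CARD('p)) / (1 + sqrt (16 * ln (2 * real CARD('p)))) \<le> 1"
    proof -
      have p1: "1 \<le> real CARD('p)" using assms by simp
      have "0 \<le> sqrt (16 * ln (2 * real CARD('p)))"
        by (intro real_sqrt_ge_zero mult_nonneg_nonneg ln_ge_zero) (use p1 in linarith)+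
      hence s1: "1 \<le> 1 + sqrt (16 * ln (2 * real CARD('p)))" by linarith
      hence "1 - real CARD('n) / real CARD('p) \<le> (1 + sqrt (16 * ln (2 * real CARD('p))))"
        using n1 s1 by linarith
      moreover have "0 < 1 + sqrt (16 * ln (2 * real CARD('p)))" using s1 by linarith
      ultimately show ?thesis by (subst pos_divide_le_eq) auto
    qed
    have f0: "(1 - real CARD('n) / real CARD('p)) / (1 + sqrt (16 * ln (2 * real CARD('p)))) \<ge> 0"
      using n1 by simp
    have "1 / sqrt (2 * pi * exp 1) \<le> 1/3" using s by (simp add: divide_simps)
    hence "1 / sqrt (2 * pi * exp 1) * ((1 - real CARD('n) / real CARD('p)) /
                   (1 + sqrt (16 * ln (2 * real CARD('p))))) \<le> 1/3 * 1"
      using f f0 by (intro mult_mono) auto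
    moreover have "0 \<le> 1 / (2 * real CARD('p))" by simp
    ultimately show ?thesis by linarith
  qed
  show ?thesis
  proof (intro conjI impI)
    assume "q \<in> {0..2}" thus "ereal (1 / (2 * pi * exp 1) * (1 - real CARD('n) / real CARD('p))^2
                  - 1 / (2 * real CARD('p)))
           \<le> (INF A :: real ^ 'p ^ 'n. INF \<delta> :: real ^ 'n \<Rightarrow> real.
                 SUP x \<in> UNIV - {0 :: real ^ 'p}. ereal \<bar>\<delta> (A *v x) / sq q x - 1\<bar>)"
      using core2[OF assms _ b1] by simp
  next
    assume "q \<in> {2<..}" hence "q \<ge> 0" by (auto intro: order_trans[of 0 2] less_imp_le)
    thus "ereal (1 / sqrt (2 * pi * exp 1) *
                  ((1 - real CARD('n) / real CARD('p)) /
                   (1 + sqrt (16 * ln (2 * real CARD('p)))))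
                  - 1 / (2 * real CARD('p)))
           \<le> (INF A :: real ^ 'p ^ 'n. INF \<delta> :: real ^ 'n \<Rightarrow> real.
                 SUP x \<in> UNIV - {0 :: real ^ 'p}. ereal \<bar>\<delta> (A *v x) / sq q x - 1\<bar>)"
      using core2[OF assms _ b2] by simp
  qed
qed

end
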